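(* Let $G$ be a finite simple graph with $n$ vertices and minimum degree $\delta$, and let $k$ be a positive integer. Then $\gamma_{gr}^{L,k}(G) \leq n-\delta+k$.
   Context: For a vertex $v$, $N(v)$ denotes its open neighborhood and $N[v]=N(v)\cup\{v\}$ its closed neighborhood. A sequence $S=(v_1,\ldots,v_m)$ of distinct vertices of $G$ is a $k$-$L$-sequence if for each $i\in[m]$ there exists a vertex $u_i\in N[v_i]$ such that the number of indices $j<i$ with $u_i\in N(v_j)$ is less than $k$. The $k$-$L$-Grundy domination number $\gamma_{gr}^{L,k}(G)$ is the maximum length of a $k$-$L$-sequence of $G$. *)

theory Defs
  imports Main
begin

definition simple_graph :: "'a set \<Rightarrow> ('a \<Rightarrow> 'a \<Rightarrow> bool) \<Rightarrow> bool" where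
  "simple_graph V E \<longleftrightarrow> finite V \<and> (\<forall>u v. E u v \<longrightarrow> E v u) \<and> (\<forall>v. \<not> E v v)
     \<and> (\<forall>u v. E u v \<longrightarrow> u \<in> V \<and> v \<in> V)"

definition open_nbhd :: "'a set \<Rightarrow> ('a \<Rightarrow> 'a \<Rightarrow> bool) \<Rightarrow> 'a \<Rightarrow> 'a set" where
  "open_nbhd V E v = {u \<in> V. E v u}"

definition closed_nbhd :: "'a set \<Rightarrow> ('a \<Rightarrow> 'a \<Rightarrow> bool) \<Rightarrow> 'a \<Rightarrow> 'a set" where
  "closed_nbhd V E v = insert v (open_nbhd V E v)"

definition degree :: "'a set \<Rightarrow> ('a \<Rightarrow> 'a \<Rightarrow> bool) \<Rightarrow> 'a \<Rightarrow> nat" where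
  "degree V E v = card (open_nbhd V E v)"

definition min_degree :: "'a set \<Rightarrow> ('a \<Rightarrow> 'a \<Rightarrow> bool) \<Rightarrow> nat" where
  "min_degree V E = Min (degree V E ` V)"

definition k_L_sequence :: "'a set \<Rightarrow> ('a \<Rightarrow> 'a \<Rightarrow> bool) \<Rightarrow> nat \<Rightarrow> 'a list \<Rightarrow> bool" where
  "k_L_sequence V E k S \<longleftrightarrow> distinct S \<and> set S \<subseteq> V \<and>
     (\<forall>i < length S. \<exists>u \<in> closed_nbhd V E (S ! i).
        card {j. j < i \<and> u \<in> open_nbhd V E (S ! j)} < k)"

definition k_L_grundy :: "'a set \<Rightarrow> ('a \<Rightarrow> 'a \<Rightarrow> bool) \<Rightarrow> nat \<Rightarrow> nat" where
  "k_L_grundy V E k = Max (length ` {S. k_L_sequence V E k S})"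

end

theory Submission
  imports Defs
begin

lemma seq_bound:
  assumes G: "simple_graph V E" and S: "k_L_sequence V E k S" and k: "k \<ge> 1"
  shows "length S \<le> card V - min_degree V E + k"
proof (cases "length S = 0")
  case True then show ?thesis using k by simp
next
  case False
  define i where "i = length S - 1"
  have fin: "finite V" using G by (simp add: simple_graph_def)
  have il: "i < length S" using False i_def by simp
  have dist: "distinct S" and sub: "set S \<subseteq> V" using S by (auto simp: k_L_sequence_def)
  obtain u where u: "u \<in> closed_nbhd V E (S ! i)"
    and c: "card {j. j < i \<and> u \<in> open_nbhd V E (S ! j)} < k"
    using S il unfolding k_L_sequence_def by blast
  have uV: "u \<in> V" using u sub il nth_mem[OF il]
    by (auto simp: closed_nbhd_def open_nbhd_def)
  define A where "A = open_nbhd V E u"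
  define B where "B = set (take i S)"
  have AV: "A \<subseteq> V" by (auto simp: A_def open_nbhd_def)
  have BV: "B \<subseteq> V" using sub B_def by (meson order_trans set_take_subset)
  have cardB: "card B = i" using dist il B_def by (simp add: distinct_card)
  have img: "(\<lambda>j. S ! j) ` {j. j < i \<and> u \<in> open_nbhd V E (S ! j)} = A \<inter> B"
  proof (rule set_eqI, rule iffI)
    fix x assume "x \<in> (\<lambda>j. S ! j) ` {j. j < i \<and> u \<in> open_nbhd V E (S ! j)}"
    then obtain j where j: "j < i" "u \<in> open_nbhd V E (S ! j)" "x = S ! j" by auto
    have "S ! j \<in> V" using sub j il by (meson less_trans nth_mem subsetD)
    moreover have "E u (S ! j)" using j G by (auto simp: open_nbhd_def simple_graph_def)
    moreover have "x \<in> B" using j il unfolding B_def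
      by (metis in_set_conv_nth length_take min.absorb4 nth_take)
    ultimately show "x \<in> A \<inter> B" using j by (auto simp: A_def open_nbhd_def)
  next
    fix x assume x: "x \<in> A \<inter> B"
    then obtain j where j: "j < i" "x = S ! j" using il unfolding B_def
      by (auto simp: in_set_conv_nth)
    have "E (S ! j) u" using x j G by (auto simp: A_def open_nbhd_def simple_graph_def)
    then have "u \<in> open_nbhd V E (S ! j)" using uV by (simp add: open_nbhd_def)
    then show "x \<in> (\<lambda>j. S ! j) ` {j. j < i \<and> u \<in> open_nbhd V E (S ! j)}" using j by auto
  qed
  have inj: "inj_on (\<lambda>j. S ! j) {j. j < i \<and> u \<in> open_nbhd V E (S ! j)}"
    using dist il by (auto simp: inj_on_def nth_eq_iff_index_eq)
  have cAB: "card (A \<inter> B) < k" using c card_image[OF inj] img by simp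
  have finA: "finite A" using AV fin finite_subset by blast
  have "card A = card (A \<inter> B) + card (A - B)"
    using finA by (metis Int_Diff_disjoint Int_Diff_Un card_Un_disjoint finite_Diff finite_Int)
  moreover have "card (A - B) \<le> card (V - B)"
    using AV fin by (intro card_mono) auto
  moreover have "card (V - B) = card V - i"
    using BV fin cardB by (simp add: card_Diff_subset finite_subset)
  moreover have "min_degree V E \<le> card A"
    using uV fin unfolding min_degree_def degree_def A_def by (intro Min_le) auto
  moreover have "card A \<le> card V" using AV fin card_mono by blast
  moreover have "i \<le> card V" using cardB BV fin card_mono by metis
  ultimately show ?thesis using i_def il cAB by linarith
qed

theorem mainTheorem1:
  fixes V :: "'a set" and E :: "'a \<Rightarrow> 'a \<Rightarrow> bool" and k :: nat
  assumes "simple_graph V E" and "V \<noteq> {}" and "k \<ge> 1"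
  shows "k_L_grundy V E k \<le> card V - min_degree V E + k"
proof -
  have b: "\<And>S. S \<in> {S. k_L_sequence V E k S} \<Longrightarrow> length S \<le> card V - min_degree V E + k"
    using seq_bound assms by blast
  have "length ` {S. k_L_sequence V E k S} \<subseteq> {..card V - min_degree V E + k}"
    using b by auto
  then have fin: "finite (length ` {S. k_L_sequence V E k S})" using finite_subset by blast
  have "[] \<in> {S. k_L_sequence V E k S}" by (simp add: k_L_sequence_def)
  then have ne: "length ` {S. k_L_sequence V E k S} \<noteq> {}" by blast
  show ?thesis unfolding k_L_grundy_def using fin ne b by (simp add: Max_le_iff)
qed

end
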